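(* Let $f(z)=z+\sum_{n=2}^{\infty}a_nz^n$ belong to $\mathcal{S}^*_{\xi}$. Then the second Hankel determinant $H_{2,2}(f)=a_2a_4-a_3^2$ satisfies $|H_{2,2}(f)|\le \frac14$. The estimate is sharp: equality holds for some function in $\mathcal{S}^*_{\xi}$.
   Context: $\mathbb{D}=\{z\in\mathbb{C}:|z|<1\}$. $\mathcal{A}$ is the class of analytic functions $f$ on $\mathbb{D}$ of the form $f(z)=z+\sum_{n\ge2}a_nz^n$. For analytic $f,g$ on $\mathbb{D}$, $f\prec g$ means there is an analytic $w:\mathbb{D}\to\mathbb{D}$ with $w(0)=0$ and $f=g\circ w$. Let $\xi(z)=1+\frac{\sin z}{1-z}$ for $z\in\mathbb{D}$, and $\mathcal{S}^*_{\xi}=\{f\in\mathcal{A}: \frac{zf'(z)}{f(z)}\prec \xi(z)\}$. *)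

theory Defs
  imports "HOL-Complex_Analysis.Complex_Analysis"
begin

definition unit_disc :: "complex set" where
  "unit_disc = ball 0 1"

definition classA :: "(complex \<Rightarrow> complex) \<Rightarrow> bool" where
  "classA f \<longleftrightarrow> f holomorphic_on unit_disc \<and> f 0 = 0 \<and> deriv f 0 = 1"

definition coeff :: "(complex \<Rightarrow> complex) \<Rightarrow> nat \<Rightarrow> complex" where
  "coeff f n = (deriv ^^ n) f 0 / fact n"

definition subordinate :: "(complex \<Rightarrow> complex) \<Rightarrow> (complex \<Rightarrow> complex) \<Rightarrow> bool" where
  "subordinate f g \<longleftrightarrow> (\<exists>w. w holomorphic_on unit_disc \<and> w ` unit_disc \<subseteq> unit_disc \<and> w 0 = 0
      \<and> (\<forall>z\<in>unit_disc. f z = g (w z)))"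

definition xi :: "complex \<Rightarrow> complex" where
  "xi z = 1 + sin z / (1 - z)"

text \<open>The function z f'(z)/f(z), extended at the origin by its limit value 1
  (f'(0) = 1 for f in class A).\<close>
definition zf'_over_f :: "(complex \<Rightarrow> complex) \<Rightarrow> complex \<Rightarrow> complex" where
  "zf'_over_f f z = (if z = 0 then 1 else z * deriv f z / f z)"

text \<open>The class S*_xi. We require f z \<noteq> 0 for z \<noteq> 0 so that the quotient is defined.\<close>
definition S_xi :: "(complex \<Rightarrow> complex) set" where
  "S_xi = {f. classA f \<and> (\<forall>z\<in>unit_disc - {0}. f z \<noteq> 0) \<and> subordinate (zf'_over_f f) xi}"

end

theory Submission
  imports Defs
begin


definition schw :: "(complex \<Rightarrow> complex) \<Rightarrow> bool" where
 "schw w \<longleftrightarrow> w holomorphic_on ball 0 1 \<and> w 0 = 0 \<and> (\<forall>z. norm z < 1 \<longrightarrow> norm (w z) < 1)"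

lemma coeff_expansion:
  assumes "g has_fps_expansion G" shows "coeff g n = fps_nth G n"
  using fps_nth_fps_expansion[OF assms] by (simp add: coeff_def)

lemma hol_expansion:
  assumes "g holomorphic_on ball 0 1" shows "g has_fps_expansion fps_expansion g 0"
  using assms by (intro has_fps_expansion_fps_expansion[of "ball 0 1"]) auto

lemma coeff_1: "coeff g 1 = deriv g 0" by (simp add: coeff_def)

lemma ev_ball: "eventually (\<lambda>z. norm z < (1::real)) (nhds (0::complex))"
proof -
  have "eventually (\<lambda>z. z \<in> ball (0::complex) 1) (nhds 0)" by (intro eventually_nhds_in_open) auto
  thus ?thesis by simp
qed

lemma expansion_cong_ball:
  fixes f g :: "complex \<Rightarrow> complex"
  assumes "f has_fps_expansion F" "\<And>z. norm z < 1 \<Longrightarrow> f z = g z"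
  shows "g has_fps_expansion F"
proof -
  have "eventually (\<lambda>z. f z = g z) (nhds 0)" using ev_ball assms(2) by (auto elim: eventually_mono)
  thus ?thesis using has_fps_expansion_cong assms(1) by blast
qed

lemma schw_c1: "schw w \<Longrightarrow> norm (coeff w 1) \<le> 1"
  unfolding schw_def coeff_1 using Schwarz_Lemma(2)[of w 0] by auto

lemma rot_coeff:
  assumes "\<And>z. norm z < 1 \<Longrightarrow> w z = \<alpha> * z"
  shows "coeff w n = fps_nth (fps_const \<alpha> * fps_X) n"
proof -
  have "(\<lambda>z. \<alpha> * z) has_fps_expansion fps_const \<alpha> * fps_X" by (intro fps_expansion_intros)
  hence "w has_fps_expansion fps_const \<alpha> * fps_X" by (rule expansion_cong_ball) (use assms in auto)
  thus ?thesis by (simp add: coeff_expansion)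
qed

lemma schw_rot:
  assumes "schw w" "norm (coeff w 1) = 1"
  shows "coeff w 2 = 0" "coeff w 3 = 0"
proof -
  obtain \<alpha> where \<alpha>: "\<forall>z. norm z < 1 \<longrightarrow> w z = \<alpha> * z"
    using Schwarz_Lemma(3)[of w 0] assms unfolding schw_def coeff_1 by auto
  show "coeff w 2 = 0" "coeff w 3 = 0" using rot_coeff[of w \<alpha>] \<alpha> by auto
qed


lemma schur_step:
  assumes w: "schw w" and a: "norm (coeff w 1) < 1"
  shows "\<exists>\<psi>. schw \<psi> \<and> coeff \<psi> 1 = coeff w 2 / (1 - cnj (coeff w 1) * coeff w 1) \<and>
     coeff \<psi> 2 = coeff w 3 / (1 - cnj (coeff w 1) * coeff w 1)
        + cnj (coeff w 1) * (coeff w 2)^2 / (1 - cnj (coeff w 1) * coeff w 1)^2"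
proof -
  define a where "a = coeff w 1"
  have hol: "w holomorphic_on ball 0 1" and w0: "w 0 = 0" and wl: "\<And>z. norm z < 1 \<Longrightarrow> norm (w z) < 1"
    using w unfolding schw_def by auto
  obtain h where holh: "h holomorphic_on ball 0 1" and wh: "\<And>z. norm z < 1 \<Longrightarrow> w z = z * h z"
     and dh: "deriv w 0 = h 0"
    using Schwarz3[OF hol w0] by blast
  have h0: "h 0 = a" using dh coeff_1[of w] by (simp add: a_def)
  have hl: "norm (h z) < 1" if z: "norm z < 1" for z
  proof (cases "z = 0")
    case True thus ?thesis using h0 a by (simp add: a_def)
  next
    case False
    have le: "norm (w z) \<le> norm z" using Schwarz_Lemma(1)[OF hol w0 wl z] .
    show ?thesis
    proof (rule ccontr)
      assume "\<not> ?thesis"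
      hence "norm (h z) \<ge> 1" by simp
      then have "norm (w z) \<ge> norm z" using wh[OF z]
        by (simp add: norm_mult mult_le_cancel_left1)
      hence "norm (w z) = norm z" using le by simp
      then obtain \<alpha> where al: "\<forall>z. norm z < 1 \<longrightarrow> w z = \<alpha> * z" "norm \<alpha> = 1"
        using Schwarz_Lemma(3)[OF hol w0 wl z] z False by blast
      have "coeff w 1 = \<alpha>" using rot_coeff[of w \<alpha> 1] al by simp
      thus False using a al by simp
    qed
  qed
  have an: "norm a < 1" using a by (simp add: a_def)
  define \<psi> where "\<psi> = (\<lambda>z. Moebius_function 0 a (h z))"
  have hol\<psi>: "\<psi> holomorphic_on ball 0 1"
    unfolding \<psi>_def
    by (rule holomorphic_on_compose_gen[OF holh Moebius_function_holomorphic[OF an], unfolded o_def])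
       (use hl in auto)
  have s\<psi>: "schw \<psi>"
    unfolding schw_def using hol\<psi> by (auto simp: \<psi>_def h0 Moebius_function_eq_zero hl an Moebius_function_norm_lt_1)
  define H where "H = fps_expansion h 0"
  have hH: "h has_fps_expansion H" unfolding H_def by (rule hol_expansion[OF holh])
  have wH: "w has_fps_expansion fps_X * H"
    by (rule expansion_cong_ball[of "\<lambda>z. z * h z"]) (use hH wh in \<open>auto intro!: fps_expansion_intros\<close>)
  define P where "P = fps_expansion \<psi> 0"
  have pP: "\<psi> has_fps_expansion P" unfolding P_def by (rule hol_expansion[OF hol\<psi>])
  have nz: "1 - cnj a * h z \<noteq> 0" if "norm z < 1" for z
  proof -
    have "norm (cnj a * h z) < 1" using norm_mult_less[of "cnj a" 1 "h z" 1] hl[OF that] an by simp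
    thus ?thesis by auto
  qed
  have e1: "(\<lambda>z. \<psi> z * (1 - cnj a * h z)) has_fps_expansion P * (1 - fps_const (cnj a) * H)"
    by (intro fps_expansion_intros pP hH)
  have e2: "(\<lambda>z. \<psi> z * (1 - cnj a * h z)) has_fps_expansion H - fps_const a"
    by (rule expansion_cong_ball[of "\<lambda>z. h z - a"]) 
       (use hH nz in \<open>auto intro!: fps_expansion_intros simp: \<psi>_def Moebius_function_simple\<close>)
  have E: "P * (1 - fps_const (cnj a) * H) = H - fps_const a"
    using fps_nth_fps_expansion[OF e1] fps_nth_fps_expansion[OF e2] by (simp add: fps_eq_iff)
  have P0: "fps_nth P 0 = 0" using coeff_expansion[OF pP, of 0] s\<psi> by (simp add: coeff_def schw_def)
  have H0: "fps_nth H 0 = a" using coeff_expansion[OF hH, of 0] h0 by (simp add: coeff_def)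
  have c1: "coeff w 2 = fps_nth H 1" using coeff_expansion[OF wH, of 2] by (simp add: numeral_2_eq_2)
  have c2: "coeff w 3 = fps_nth H 2" using coeff_expansion[OF wH, of 3] by (simp add: numeral_3_eq_3 numeral_2_eq_2)
  have d: "1 - cnj a * a \<noteq> 0" using nz[of 0] h0 by simp
  have E1: "fps_nth P 1 * (1 - cnj a * a) = fps_nth H 1"
    using arg_cong[OF E, of "\<lambda>F. fps_nth F 1"] P0 H0 by (simp add: fps_mult_nth algebra_simps)
  have E2: "fps_nth P 2 * (1 - cnj a * a) - fps_nth P 1 * cnj a * fps_nth H 1 = fps_nth H 2"
    using arg_cong[OF E, of "\<lambda>F. fps_nth F 2"] P0 H0 by (simp add: fps_mult_nth algebra_simps numeral_2_eq_2)
  have P1: "fps_nth P 1 = fps_nth H 1 / (1 - cnj a * a)" using E1 d by (simp add: field_simps)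
  have P2: "fps_nth P 2 = fps_nth H 2 / (1 - cnj a * a) + cnj a * (fps_nth H 1)^2 / (1 - cnj a * a)^2"
  proof -
    define D where "D = 1 - cnj a * a"
    have "fps_nth P 2 = (fps_nth H 2 + fps_nth P 1 * cnj a * fps_nth H 1) / D"
      using E2 d unfolding D_def by (simp add: eq_divide_eq algebra_simps)
    also have "\<dots> = fps_nth H 2 / D + cnj a * (fps_nth H 1)^2 / D^2"
      unfolding P1 D_def[symmetric] using d unfolding D_def[symmetric]
      by (simp add: field_simps power2_eq_square)
    finally show ?thesis unfolding D_def .
  qed
  show ?thesis
    using s\<psi> P1 P2 c1 c2 coeff_expansion[OF pP] by (auto simp: a_def)
qed


lemma cnj_mult_self: "1 - cnj a * a = complex_of_real (1 - norm a ^ 2)"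
  using complex_norm_square[of a] by (simp add: mult.commute)

lemma schw_c2:
  assumes w: "schw w" shows "norm (coeff w 2) \<le> 1 - norm (coeff w 1)^2"
proof (cases "norm (coeff w 1) = 1")
  case True thus ?thesis using schw_rot[OF w True] by simp
next
  case False
  hence a: "norm (coeff w 1) < 1" using schw_c1[OF w] by simp
  define r where "r = norm (coeff w 1)"
  have d: "1 - r^2 > 0" using a r_def norm_ge_zero[of "coeff w 1"]
    by (simp add: power_less_one_iff abs_square_less_1)
  obtain \<psi> where s: "schw \<psi>" and p1: "coeff \<psi> 1 = coeff w 2 / (1 - cnj (coeff w 1) * coeff w 1)"
    using schur_step[OF w a] by blast
  have "norm (coeff \<psi> 1) \<le> 1" by (rule schw_c1[OF s])
  moreover
  have D: "1 - cnj (coeff w 1) * coeff w 1 = of_real (1 - r^2)" unfolding cnj_mult_self r_def ..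
  have "norm (coeff \<psi> 1) = norm (coeff w 2) / (1 - r^2)" unfolding p1 D
    by (simp only: norm_divide norm_of_real) (use d in simp)
  ultimately have "norm (coeff w 2) / (1 - r^2) \<le> 1" by simp
  thus ?thesis using d unfolding r_def by (simp add: divide_le_eq)
qed

lemma schw_c3:
  assumes w: "schw w"
  shows "norm (coeff w 3) \<le> (1 - norm (coeff w 1)^2) - norm (coeff w 2)^2 / (1 + norm (coeff w 1))"
proof (cases "norm (coeff w 1) = 1")
  case True thus ?thesis using schw_rot[OF w True] by simp
next
  case False
  hence a: "norm (coeff w 1) < 1" using schw_c1[OF w] by simp
  define r where "r = norm (coeff w 1)"
  define s where "s = norm (coeff w 2)"
  define d where "d = 1 - r^2"
  have r0: "r \<ge> 0" "r < 1" using a r_def by auto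
  have d: "d > 0" using r0 unfolding d_def by (simp add: power_less_one_iff abs_square_less_1)
  obtain \<psi> where sp: "schw \<psi>" and p1: "coeff \<psi> 1 = coeff w 2 / (1 - cnj (coeff w 1) * coeff w 1)"
    and p2: "coeff \<psi> 2 = coeff w 3 / (1 - cnj (coeff w 1) * coeff w 1)
        + cnj (coeff w 1) * (coeff w 2)^2 / (1 - cnj (coeff w 1) * coeff w 1)^2"
    using schur_step[OF w a] by blast
  have D: "1 - cnj (coeff w 1) * coeff w 1 = of_real d" unfolding cnj_mult_self d_def r_def ..
  have np1: "norm (coeff \<psi> 1) = s / d" unfolding p1 D s_def
    by (simp only: norm_divide norm_of_real) (use d in simp)
  have "norm (coeff \<psi> 2) \<le> 1 - (s/d)^2" using schw_c2[OF sp] np1 by simp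
  have c3: "coeff w 3 = of_real d * coeff \<psi> 2 - cnj (coeff w 1) * (coeff w 2)^2 / of_real d"
    unfolding p2 D using d by (simp add: field_simps power2_eq_square)
  have "norm (coeff w 3) \<le> norm (of_real d * coeff \<psi> 2) + norm (cnj (coeff w 1) * (coeff w 2)^2 / of_real d)"
    unfolding c3 by (rule norm_triangle_ineq4)
  also have "\<dots> = d * norm (coeff \<psi> 2) + r * s^2 / d"
    using d by (simp add: norm_mult norm_divide norm_power r_def s_def)
  also have "\<dots> \<le> d * (1 - (s/d)^2) + r * s^2 / d"
    using \<open>norm (coeff \<psi> 2) \<le> 1 - (s/d)^2\<close> d by simp
  also have "\<dots> = d - s^2 / (1 + r)"
  proof -
    have "1 + r > 0" using r0 by simp
    moreover have "d = (1 - r) * (1 + r)" unfolding d_def by (simp add: algebra_simps power2_eq_square)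
    ultimately have e: "s^2 * (1 - r) / d = s^2 / (1 + r)"
    proof -
      assume "1 + r > 0" "d = (1 - r) * (1 + r)"
      have "s^2 * (1 - r) = s^2 / (1 + r) * ((1 - r) * (1 + r))" using \<open>1 + r > 0\<close>
        by (simp add: field_simps)
      hence "s^2 * (1 - r) = s^2 / (1 + r) * d" using \<open>d = (1 - r) * (1 + r)\<close> by simp
      thus ?thesis using d by (simp add: divide_eq_eq)
    qed
    have "d * (1 - (s/d)^2) + r * s^2 / d = d - s^2 * (1 - r) / d" using d
      by (simp add: field_simps power2_eq_square)
    thus ?thesis using e by simp
  qed
  finally show ?thesis unfolding d_def r_def s_def .
qed



definition XI :: "complex fps" where "XI = 1 + fps_sin 1 * Abs_fps (\<lambda>_. 1)"

lemma xi_expansion: "xi has_fps_expansion XI"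
proof -
  have inv: "inverse (1 - fps_X) = Abs_fps (\<lambda>_. 1::complex)"
    using fps_inverse_gp'[where ?'a = complex] fps_inverse_idempotent[of "Abs_fps (\<lambda>_. 1::complex)"]
    by simp
  have "(\<lambda>z::complex. 1 + sin z * inverse (1 - z)) has_fps_expansion 1 + fps_sin 1 * inverse (1 - fps_X)"
    by (intro fps_expansion_intros) auto
  hence "(\<lambda>z::complex. 1 + sin z * inverse (1 - z)) has_fps_expansion XI" unfolding XI_def inv .
  moreover have "(\<lambda>z::complex. 1 + sin z * inverse (1 - z)) = xi"
    by (auto simp: xi_def fun_eq_iff field_simps)
  ultimately show ?thesis by simp
qed

lemma XI_nth: "fps_nth XI 0 = 1" "fps_nth XI 1 = 1" "fps_nth XI 2 = 1" "fps_nth XI 3 = 5/6"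
  by (simp_all add: XI_def fps_mult_nth fps_sin_def numeral_3_eq_3 numeral_2_eq_2 fact_numeral) presburger

lemma compose_nth:
  fixes A W :: "complex fps"
  assumes "fps_nth W 0 = 0"
  shows "fps_nth (fps_compose A W) 1 = fps_nth A 1 * fps_nth W 1"
    "fps_nth (fps_compose A W) 2 = fps_nth A 1 * fps_nth W 2 + fps_nth A 2 * (fps_nth W 1)^2"
    "fps_nth (fps_compose A W) 3 = fps_nth A 1 * fps_nth W 3 + fps_nth A 2 * 2 * fps_nth W 1 * fps_nth W 2
        + fps_nth A 3 * (fps_nth W 1)^3"
  using assms
  by (simp_all add: fps_compose_nth fps_mult_nth numeral_3_eq_3 numeral_2_eq_2 power2_eq_square power3_eq_cube algebra_simps)


lemma hankel_formula:
  assumes fA: "classA f" and w: "schw w"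
    and nz: "\<And>z. z \<in> unit_disc - {0} \<Longrightarrow> f z \<noteq> 0"
    and eq: "\<And>z. z \<in> unit_disc \<Longrightarrow> zf'_over_f f z = xi (w z)"
  shows "coeff f 2 * coeff f 4 - (coeff f 3)^2 =
     coeff w 1 * coeff w 3 / 3 + (coeff w 1)^2 * coeff w 2 / 6 - (coeff w 1)^4 / 18 - (coeff w 2)^2 / 4"
proof -
  have holf: "f holomorphic_on ball 0 1" and f0: "f 0 = 0" and f1: "deriv f 0 = 1"
    using fA by (auto simp: classA_def unit_disc_def)
  have holw: "w holomorphic_on ball 0 1" and w0: "w 0 = 0" using w by (auto simp: schw_def)
  define F where "F = fps_expansion f 0"
  define W where "W = fps_expansion w 0"
  have fF: "f has_fps_expansion F" unfolding F_def by (rule hol_expansion[OF holf])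
  have wW: "w has_fps_expansion W" unfolding W_def by (rule hol_expansion[OF holw])
  have W0: "fps_nth W 0 = 0" using coeff_expansion[OF wW, of 0] w0 by (simp add: coeff_def)
  have F0: "fps_nth F 0 = 0" using coeff_expansion[OF fF, of 0] f0 by (simp add: coeff_def)
  have F1: "fps_nth F 1 = 1" using coeff_expansion[OF fF, of 1] f1 coeff_1[of f] by simp
  have e1: "(\<lambda>z. z * deriv f z) has_fps_expansion fps_X * fps_deriv F"
    by (intro fps_expansion_intros fF)
  have comp: "(xi \<circ> w) has_fps_expansion fps_compose XI W"
    by (rule has_fps_expansion_compose[OF xi_expansion wW W0])
  have e2: "(\<lambda>z. f z * (xi \<circ> w) z) has_fps_expansion F * fps_compose XI W"
    by (intro fps_expansion_intros fF comp)
  have e3: "(\<lambda>z. f z * (xi \<circ> w) z) has_fps_expansion fps_X * fps_deriv F"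
  proof (rule expansion_cong_ball[OF e1])
    fix z :: complex assume z: "norm z < 1"
    show "z * deriv f z = f z * (xi \<circ> w) z"
    proof (cases "z = 0")
      case True thus ?thesis by (simp add: f0)
    next
      case False
      hence "z \<in> unit_disc - {0}" using z by (simp add: unit_disc_def)
      hence "f z \<noteq> 0" "z * deriv f z / f z = xi (w z)" using nz eq[of z] False
        by (auto simp: zf'_over_f_def)
      thus ?thesis by (simp add: field_simps)
    qed
  qed
  have E: "F * fps_compose XI W = fps_X * fps_deriv F"
    using fps_nth_fps_expansion[OF e2] fps_nth_fps_expansion[OF e3] by (simp add: fps_eq_iff)
  define c1 where "c1 = fps_nth W 1"
  define c2 where "c2 = fps_nth W 2"
  define c3 where "c3 = fps_nth W 3"
  define p1 where "p1 = fps_nth (fps_compose XI W) 1"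
  define p2 where "p2 = fps_nth (fps_compose XI W) 2"
  define p3 where "p3 = fps_nth (fps_compose XI W) 3"
  have p1: "p1 = c1" and p2: "p2 = c2 + c1^2" and p3: "p3 = c3 + 2 * c1 * c2 + 5/6 * c1^3"
    unfolding p1_def p2_def p3_def c1_def c2_def c3_def using compose_nth[OF W0, of XI] XI_nth
    by (simp_all add: algebra_simps)
  have P0: "fps_nth (fps_compose XI W) 0 = 1" using XI_nth by simp
  have n2: "2 * fps_nth F 2 = fps_nth F 2 + p1"
    using arg_cong[OF E, of "\<lambda>G. fps_nth G 2"] F0 F1 P0 unfolding p1_def
    by (simp add: fps_mult_nth numeral_2_eq_2)
  have n3: "3 * fps_nth F 3 = fps_nth F 3 + fps_nth F 2 * p1 + p2"
    using arg_cong[OF E, of "\<lambda>G. fps_nth G 3"] F0 F1 P0 unfolding p1_def p2_def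
    by (simp add: fps_mult_nth numeral_3_eq_3 numeral_2_eq_2 algebra_simps)
  have n4: "4 * fps_nth F 4 = fps_nth F 4 + fps_nth F 3 * p1 + fps_nth F 2 * p2 + p3"
    using arg_cong[OF E, of "\<lambda>G. fps_nth G 4"] F0 F1 P0 unfolding p1_def p2_def p3_def
    by (simp add: fps_mult_nth eval_nat_numeral algebra_simps)
  have a2: "fps_nth F 2 = c1" using n2 p1 by simp
  have a3: "fps_nth F 3 = (c2 + 2 * c1^2) / 2" using n3 a2 p1 p2 by (simp add: field_simps power2_eq_square)
  have a4: "fps_nth F 4 = (c3 + 7/2 * c1 * c2 + 17/6 * c1^3) / 3"
  proof -
    have "fps_nth F 4 = (fps_nth F 3 * p1 + fps_nth F 2 * p2 + p3) / 3" using n4 by (simp add: field_simps)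
    also have "\<dots> = (c3 + 7/2 * c1 * c2 + 17/6 * c1^3) / 3" unfolding a2 a3 p1 p2 p3
      by (simp add: field_simps power2_eq_square power3_eq_cube)
    finally show ?thesis .
  qed
  have cf: "coeff f n = fps_nth F n" for n using coeff_expansion[OF fF] .
  have cw: "coeff w n = fps_nth W n" for n using coeff_expansion[OF wW] .
  show ?thesis unfolding cf cw a2 a3 a4 c1_def[symmetric] c2_def[symmetric] c3_def[symmetric]
    by (simp add: field_simps power2_eq_square power3_eq_cube power4_eq_xxxx)
qed



lemma real_ineq:
  fixes r s :: real
  assumes r0: "0 \<le> r" and r1: "r \<le> 1" and s0: "0 \<le> s" and s1: "s \<le> 1 - r^2"
  shows "r * (1 - r^2 - s^2/(1+r)) / 3 + r^2 * s / 6 + r^4 / 18 + s^2 / 4 \<le> 1/4"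
proof -
  define A where "A = r * (1 - r^2) / 3 + r^4 / 18"
  have A: "A \<le> 1/4"
  proof -
    have "0 \<le> (2*r - 1) * (2*r - 1)" by simp
    hence "r * (1 - r) \<le> 1/4" by (simp add: algebra_simps)
    moreover have "0 \<le> r * (1 - r)" using r0 r1 by simp
    ultimately have "r * (1 - r) * (1 + r) \<le> 1/4 * 2" using r1 r0
      by (intro mult_mono) auto
    hence "r * (1 - r^2) \<le> 1/2" by (simp add: algebra_simps power2_eq_square)
    moreover have "r^4 \<le> 1" using r0 r1 by (simp add: power_le_one)
    ultimately show ?thesis unfolding A_def by simp
  qed
  define d where "d = 1 - r^2"
  show ?thesis
  proof (cases "d = 0")
    case True
    hence "s = 0" using s0 s1 d_def by simp
    thus ?thesis using A unfolding A_def by simp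
  next
    case False
    have d0: "d > 0" using False s0 s1 d_def by simp
    define G where "G = 1/4 - 7/36 * r^4"
    define C where "C = 1/4 - r / (3 * (1 + r))"
    have rp: "1 + r > 0" using r0 by simp
    define B where "B = (1 + r^2)/4 - r/3"
    have id: "r * (1 - r^2 - s^2/(1+r)) / 3 + r^2 * s / 6 + r^4 / 18 + s^2 / 4
       = A + B * s + C * (s^2 - s * d)"
      unfolding A_def B_def C_def d_def using rp
      by (simp add: field_simps power2_eq_square power4_eq_xxxx) (simp add: algebra_simps)?
    have BG: "B * d = G - A" unfolding A_def B_def G_def d_def
      by (simp add: field_simps power2_eq_square power4_eq_xxxx)
    have "r / (3 * (1 + r)) \<le> 1/4" using rp r0 r1 by (simp add: field_simps)
    hence C0: "C \<ge> 0" unfolding C_def by simp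
    have "s * (s - d) \<le> 0" by (rule mult_nonneg_nonpos) (use s0 s1 d_def in auto)
    hence "s^2 - s * d \<le> 0" by (simp add: power2_eq_square algebra_simps)
    hence "C * (s^2 - s * d) \<le> 0" using C0 by (simp add: mult_nonneg_nonpos)
    moreover have "A + B * s \<le> 1/4"
    proof -
      have gen: "\<And>x::real. 1/4 * (1 - x) + 1/4 * x = 1/4" by (simp add: field_simps)
      have l: "s / d \<le> 1" "0 \<le> s / d" using s1 s0 d0 unfolding d_def by auto
      have "B * s = (B * d) * (s / d)" using d0 by simp
      hence "B * s = (G - A) * (s / d)" using BG by simp
      hence "A + B * s = A * (1 - s/d) + G * (s / d)" by (simp add: algebra_simps diff_divide_distrib add_divide_distrib)
      also have "\<dots> \<le> 1/4 * (1 - s/d) + 1/4 * (s/d)"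
        using A l unfolding G_def by (intro add_mono mult_right_mono) auto
      also have "\<dots> = 1/4" using gen[of "s/d"] .
      finally show ?thesis .
    qed
    ultimately show ?thesis unfolding id by simp
  qed
qed



lemma extremal_exists:
  "\<exists>f. classA f \<and> (\<forall>z\<in>unit_disc - {0}. f z \<noteq> 0) \<and> (\<forall>z\<in>unit_disc. zf'_over_f f z = xi (z^2))"
proof -
  define g where "g = (\<lambda>z::complex. sin (z^2) / (1 - z^2))"
  have nz1: "1 - z^2 \<noteq> 0" if "z \<in> ball 0 1" for z :: complex
  proof
    assume "1 - z^2 = 0"
    hence "norm (z^2) = 1" by (metis eq_iff_diff_eq_0 norm_one)
    moreover have "(norm z)^2 < 1" using that by (simp add: abs_square_less_1)
    ultimately show False by (simp add: norm_power)
  qed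
  have holg: "g holomorphic_on ball 0 1" unfolding g_def
    by (intro holomorphic_intros) (use nz1 in auto)
  obtain h where holh: "h holomorphic_on ball 0 1" and gh: "\<And>z. norm z < 1 \<Longrightarrow> g z = z * h z"
    using Schwarz3[OF holg] by (auto simp: g_def)
  obtain Q where Q: "\<And>x. x \<in> ball 0 1 \<Longrightarrow> (Q has_field_derivative h x) (at x within ball 0 1)"
    using holomorphic_convex_primitive'[OF convex_ball open_ball holh] by blast
  have Qd: "(Q has_field_derivative h x) (at x)" if "norm x < 1" for x
    using Q[of x] that at_within_open[of x "ball 0 1"] by simp
  define f where "f = (\<lambda>z. z * exp (Q z - Q 0))"
  have fd: "(f has_field_derivative exp (Q z - Q 0) * (1 + z * h z)) (at z)" if "norm z < 1" for z
    unfolding f_def by (rule derivative_eq_intros Qd[OF that] refl | simp add: algebra_simps)+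
  have df: "deriv f z = exp (Q z - Q 0) * (1 + z * h z)" if "norm z < 1" for z
    using DERIV_imp_deriv[OF fd[OF that]] .
  have holf: "f holomorphic_on unit_disc"
    unfolding unit_disc_def holomorphic_on_def
  proof
    fix x :: complex assume "x \<in> ball 0 1"
    hence "f field_differentiable at x" using fd[of x] unfolding field_differentiable_def by auto
    thus "f field_differentiable at x within ball 0 1" by (rule field_differentiable_at_within)
  qed
  have cA: "classA f" unfolding classA_def using holf df[of 0] by (simp add: f_def)
  have fnz: "\<forall>z\<in>unit_disc - {0}. f z \<noteq> 0" by (simp add: f_def)
  have "\<forall>z\<in>unit_disc. zf'_over_f f z = xi (z^2)"
  proof
    fix z assume z: "z \<in> unit_disc"
    hence zn: "norm z < 1" by (simp add: unit_disc_def)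
    show "zf'_over_f f z = xi (z^2)"
    proof (cases "z = 0")
      case True thus ?thesis by (simp add: zf'_over_f_def xi_def)
    next
      case False
      have "zf'_over_f f z = 1 + z * h z" using False df[OF zn] by (simp add: zf'_over_f_def f_def)
      also have "\<dots> = 1 + g z" using gh[OF zn] by simp
      also have "\<dots> = xi (z^2)" by (simp add: g_def xi_def)
      finally show ?thesis .
    qed
  qed
  thus ?thesis using cA fnz by blast
qed

lemma sq_schw: "schw (\<lambda>z. z^2)"
  unfolding schw_def by (auto simp: norm_power power_less_one_iff abs_square_less_1 intro!: holomorphic_intros)

lemma sq_coeffs: "coeff (\<lambda>z. z^2) 1 = 0" "coeff (\<lambda>z. z^2) 2 = 1" "coeff (\<lambda>z. z^2) 3 = 0"
proof -
  have e: "(\<lambda>z::complex. z^2) has_fps_expansion fps_X^2" by (intro fps_expansion_intros)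
  show "coeff (\<lambda>z. z^2) 1 = 0" "coeff (\<lambda>z. z^2) 2 = 1" "coeff (\<lambda>z. z^2) 3 = 0"
    using coeff_expansion[OF e] by (simp_all add: fps_X_power_iff)
qed


theorem theorem3p5:
  shows "(\<forall>f\<in>S_xi. cmod (coeff f 2 * coeff f 4 - (coeff f 3)^2) \<le> 1/4)
       \<and> (\<exists>f\<in>S_xi. cmod (coeff f 2 * coeff f 4 - (coeff f 3)^2) = 1/4)"
proof
  show "\<forall>f\<in>S_xi. cmod (coeff f 2 * coeff f 4 - (coeff f 3)^2) \<le> 1/4"
  proof
    fix f assume "f \<in> S_xi"
    hence fA: "classA f" and nz: "\<And>z. z \<in> unit_disc - {0} \<Longrightarrow> f z \<noteq> 0"
      and sub: "subordinate (zf'_over_f f) xi" by (auto simp: S_xi_def)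
    obtain w where hw: "w holomorphic_on unit_disc" and wD: "w ` unit_disc \<subseteq> unit_disc" and w0: "w 0 = 0"
      and eq: "\<And>z. z \<in> unit_disc \<Longrightarrow> zf'_over_f f z = xi (w z)"
      using sub unfolding subordinate_def by blast
    have w: "schw w" unfolding schw_def using hw wD w0 by (auto simp: unit_disc_def image_subset_iff)
    define c1 where "c1 = coeff w 1"
    define c2 where "c2 = coeff w 2"
    define c3 where "c3 = coeff w 3"
    define r where "r = norm c1"
    define s where "s = norm c2"
    have r0: "0 \<le> r" "r \<le> 1" using schw_c1[OF w] by (auto simp: r_def c1_def)
    have s0: "0 \<le> s" "s \<le> 1 - r^2" using schw_c2[OF w] by (auto simp: s_def r_def c1_def c2_def)
    have t: "norm c3 \<le> 1 - r^2 - s^2/(1+r)" using schw_c3[OF w] by (simp add: s_def r_def c1_def c2_def c3_def)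
    have "cmod (coeff f 2 * coeff f 4 - (coeff f 3)^2) = norm (c1 * c3 / 3 + c1^2 * c2 / 6 - c1^4 / 18 - c2^2 / 4)"
      using hankel_formula[OF fA w nz eq] by (simp add: c1_def c2_def c3_def)
    also have "\<dots> \<le> norm (c1 * c3 / 3) + norm (c1^2 * c2 / 6) + norm (c1^4 / 18) + norm (c2^2 / 4)"
      by (rule order.trans[OF norm_triangle_ineq4] add_mono order.trans[OF norm_triangle_ineq] order.refl)+
    also have "\<dots> = r * norm c3 / 3 + r^2 * s / 6 + r^4 / 18 + s^2 / 4"
      by (simp add: norm_mult norm_divide norm_power r_def s_def)
    also have "\<dots> \<le> r * (1 - r^2 - s^2/(1+r)) / 3 + r^2 * s / 6 + r^4 / 18 + s^2 / 4"
      using t r0 by (simp add: mult_left_mono divide_right_mono)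
    also have "\<dots> \<le> 1/4" by (rule real_ineq) (use r0 s0 in auto)
    finally show "cmod (coeff f 2 * coeff f 4 - (coeff f 3)^2) \<le> 1/4" .
  qed
next
  obtain f where fA: "classA f" and nz: "\<forall>z\<in>unit_disc - {0}. f z \<noteq> 0"
    and eq: "\<forall>z\<in>unit_disc. zf'_over_f f z = xi (z^2)"
    using extremal_exists by blast
  have "subordinate (zf'_over_f f) xi"
    unfolding subordinate_def
    by (rule exI[of _ "\<lambda>z. z^2"]) (use sq_schw eq in \<open>auto simp: schw_def unit_disc_def\<close>)
  hence fS: "f \<in> S_xi" using fA nz by (simp add: S_xi_def)
  have "coeff f 2 * coeff f 4 - (coeff f 3)^2 = - 1/4"
    using hankel_formula[OF fA sq_schw, of] nz eq sq_coeffs by simp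
  hence "cmod (coeff f 2 * coeff f 4 - (coeff f 3)^2) = 1/4" by simp
  thus "\<exists>f\<in>S_xi. cmod (coeff f 2 * coeff f 4 - (coeff f 3)^2) = 1/4" using fS by blast
qed

end
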